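(* Let $q\in L^1_{\mathrm{loc}}(\mathbb{R})$ be such that $\rho(\tilde D)\neq\emptyset$, let $\theta\in[0,2\pi)$, $\alpha=(\cos\theta,\sin\theta)$, $\beta=\alpha U$. Let $\Theta^{\tilde{\mathscr H}},\Phi^{\tilde{\mathscr H}}$ be the solutions of $\tilde{\mathscr H}\Psi=z\Psi$ with $\Theta^{\tilde{\mathscr H}}(z,0,\alpha)=(\cos\theta,\sin\theta)^\top$, $\Phi^{\tilde{\mathscr H}}(z,0,\alpha)=(-\sin\theta,\cos\theta)^\top$, and let $\Theta^{\tilde{\mathscr D}},\Phi^{\tilde{\mathscr D}}$ be the solutions of $\tilde{\mathscr D}\Psi=z\Psi$ with $\Theta^{\tilde{\mathscr D}}(z,0,\beta)=-\frac{1+i}{2}(e^{i\theta},e^{-i\theta})^\top$, $\Phi^{\tilde{\mathscr D}}(z,0,\beta)=\frac{1-i}{2}(e^{i\theta},-e^{-i\theta})^\top$. For $z\in\rho(\tilde D)\cap\rho(\tilde D_\pm(\beta))$ let $\Psi^{\tilde{\mathscr H}}_\pm=\Theta^{\tilde{\mathscr H}}+m^{\tilde{\mathscr H}}_\pm(z,\alpha)\Phi^{\tilde{\mathscr H}}$ and $\Psi^{\tilde{\mathscr D}}_\pm=\Theta^{\tilde{\mathscr D}}+m^{\tilde{\mathscr D}}_\pm(z,\beta)\Phi^{\tilde{\mathscr D}}$ be the (uniquely normalized) solutions lying in $L^2([0,\pm\infty))^2$. Then for $z\in\rho(\tilde D)\cap\rho(\tilde D_\pm(\beta))=\rho(\tilde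 H)\cap\rho(\tilde H_\pm(\alpha))$ and $x\in\mathbb{R}$, $\Psi^{\tilde{\mathscr D}}_\pm(z,x,\beta)=U^{-1}\Psi^{\tilde{\mathscr H}}_\pm(z,x,\alpha)$, and in particular $m^{\tilde{\mathscr D}}_\pm(z,\beta)=m^{\tilde{\mathscr H}}_\pm(z,\alpha)$.
   Context: $\sigma_3=\begin{pmatrix}1&0\\0&-1\end{pmatrix}$, $\sigma_4=\begin{pmatrix}0&1\\-1&0\end{pmatrix}$, $U=\frac12\begin{pmatrix}-1+i & -1+i\\ 1+i & -1-i\end{pmatrix}$. For complex $q\in L^1_{\mathrm{loc}}(\mathbb{R})$: $\tilde{\mathscr D}=i\sigma_3\frac{d}{dx}+i\begin{pmatrix}0&-q\\ -\overline q&0\end{pmatrix}$, $\tilde{\mathscr H}=U\tilde{\mathscr D}U^{-1}=-\sigma_4\frac{d}{dx}+i\begin{pmatrix}-\operatorname{Re}q & -\operatorname{Im}q\\ -\operatorname{Im}q & \operatorname{Re}q\end{pmatrix}$. $\tilde D$ (resp. $\tilde H$) is the operator in $L^2(\mathbb{R})^2$ acting as $\tilde{\mathscr D}$ (resp. $\tilde{\mathscr H}$) on the maximal domain $\{\Psi\in L^2\cap AC_{\mathrm{loc}}:\text{expression applied to }\Psi\in L^2\}$; $\tilde H=U\tilde DU^{-1}$. The half-line operators $\tilde D_\pm(\beta)$ in $L^2([0,\pm\infty))^2$ act as $\tilde{\mathscr D}$ on $\{\Psi\in L^2([0,\pm\infty))^2\cap AC_{\mathrm{loc}}([0,\pm\infty))^2:\beta\Psi(0)=0,\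 \tilde{\mathscr D}\Psi\in L^2([0,\pm\infty))^2\}$, and $\tilde H_\pm(\alpha)$ analogously with $\tilde{\mathscr H}$ and $\alpha\Psi(0)=0$; $\tilde H_\pm(\alpha)=U\tilde D_\pm(\beta)U^{-1}$. Here $[0,-\infty)$ means $(-\infty,0]$. Known facts used to define the $m$'s: for $z\in\rho(\tilde D)$ the solutions of $\tilde{\mathscr D}\Psi=z\Psi$ in $L^2([0,\pm\infty))^2$ form a one-dimensional space, and for $z$ also in $\rho(\tilde D_\pm(\beta))$ these are not multiples of $\Phi^{\tilde{\mathscr D}}$ (similarly for $\tilde{\mathscr H}$), so the normalized solutions exist uniquely. *)

theory Defs
  imports "HOL-Analysis.Analysis"
begin

type_synonym cvec = "complex ^ 2"
type_synonym cmat = "complex ^ 2 ^ 2"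

definition mat2 :: "complex \<Rightarrow> complex \<Rightarrow> complex \<Rightarrow> complex \<Rightarrow> cmat" where
  "mat2 a b c d = vector [vector [a, b], vector [c, d]]"

definition vec2 :: "complex \<Rightarrow> complex \<Rightarrow> cvec" where
  "vec2 a b = vector [a, b]"

definition sigma3 :: cmat where "sigma3 = mat2 1 0 0 (-1)"
definition sigma4 :: cmat where "sigma4 = mat2 0 1 (-1) 0"
definition Umat :: cmat where
  "Umat = (1/2) *\<^sub>R mat2 (-1 + \<i>) (-1 + \<i>) (1 + \<i>) (-1 - \<i>)"

text \<open>Coefficients: the differential expressions are  A (d/dx) + V(x).\<close>
definition A_D :: cmat where "A_D = (\<chi> i j. \<i> * sigma3 $ i $ j)"
definition V_D :: "(real \<Rightarrow> complex) \<Rightarrow> real \<Rightarrow> cmat" where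
  "V_D q x = (\<chi> i j. \<i> * mat2 0 (- q x) (- cnj (q x)) 0 $ i $ j)"
definition A_H :: cmat where "A_H = - sigma4"
definition V_H :: "(real \<Rightarrow> complex) \<Rightarrow> real \<Rightarrow> cmat" where
  "V_H q x = (\<chi> i j. \<i> * mat2 (- of_real (Re (q x))) (- of_real (Im (q x)))
                               (- of_real (Im (q x))) (of_real (Re (q x))) $ i $ j)"

definition loc_integrable :: "(real \<Rightarrow> complex) \<Rightarrow> bool" where
  "loc_integrable q \<longleftrightarrow> (\<forall>a b. q absolutely_integrable_on {a..b})"

text \<open>ode_rel A V S Psi F: \<Psi> is locally absolutely continuous on the interval S
  (i.e. on every compact subinterval it is the integral of an integrable derivative g)
  and the expression A \<Psi>' + V \<Psi> equals F almost everywhere on S.\<close>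
definition ode_rel :: "cmat \<Rightarrow> (real \<Rightarrow> cmat) \<Rightarrow> real set \<Rightarrow> (real \<Rightarrow> cvec) \<Rightarrow> (real \<Rightarrow> cvec) \<Rightarrow> bool" where
  "ode_rel A V S \<Psi> F \<longleftrightarrow>
     (\<exists>g. (\<forall>a\<in>S. \<forall>b\<in>S. a \<le> b \<longrightarrow>
            g absolutely_integrable_on {a..b} \<and> \<Psi> b - \<Psi> a = integral {a..b} g) \<and>
          (AE x in lborel. x \<in> S \<longrightarrow> F x = A *v g x + V x *v \<Psi> x))"

definition sq_int :: "real set \<Rightarrow> (real \<Rightarrow> cvec) \<Rightarrow> bool" where
  "sq_int S f \<longleftrightarrow> f measurable_on S \<and> (\<lambda>x. (norm (f x))\<^sup>2) integrable_on S"

definition l2norm :: "real set \<Rightarrow> (real \<Rightarrow> cvec) \<Rightarrow> real" where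
  "l2norm S f = sqrt (integral S (\<lambda>x. (norm (f x))\<^sup>2))"

text \<open>Graph of the maximal operator in L^2(S)^2 with boundary condition bc:
  (\<Psi>, F) with \<Psi> in the domain and F = T\<Psi>.\<close>
definition op_graph :: "cmat \<Rightarrow> (real \<Rightarrow> cmat) \<Rightarrow> real set \<Rightarrow> ((real \<Rightarrow> cvec) \<Rightarrow> bool)
    \<Rightarrow> (real \<Rightarrow> cvec) \<Rightarrow> (real \<Rightarrow> cvec) \<Rightarrow> bool" where
  "op_graph A V S bc \<Psi> F \<longleftrightarrow> sq_int S \<Psi> \<and> bc \<Psi> \<and> ode_rel A V S \<Psi> F \<and> sq_int S F"

definition resolvent_set :: "cmat \<Rightarrow> (real \<Rightarrow> cmat) \<Rightarrow> real set \<Rightarrow> ((real \<Rightarrow> cvec) \<Rightarrow> bool)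
    \<Rightarrow> complex set" where
  "resolvent_set A V S bc = {z.
     (\<forall>f. sq_int S f \<longrightarrow> (\<exists>\<Psi> F. op_graph A V S bc \<Psi> F \<and>
          (AE x in lborel. x \<in> S \<longrightarrow> F x - z *s \<Psi> x = f x))) \<and>
     (\<exists>C. \<forall>\<Psi> F. op_graph A V S bc \<Psi> F \<longrightarrow>
          l2norm S \<Psi> \<le> C * l2norm S (\<lambda>x. F x - z *s \<Psi> x))}"

definition no_bc :: "(real \<Rightarrow> cvec) \<Rightarrow> bool" where "no_bc \<Psi> = True"

definition bc0 :: "cvec \<Rightarrow> (real \<Rightarrow> cvec) \<Rightarrow> bool" where
  "bc0 \<gamma> \<Psi> \<longleftrightarrow> (\<Sum>i\<in>UNIV. \<gamma> $ i * \<Psi> 0 $ i) = 0"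

definition weyl_m :: "real set \<Rightarrow> (real \<Rightarrow> cvec) \<Rightarrow> (real \<Rightarrow> cvec) \<Rightarrow> complex" where
  "weyl_m S \<Theta> \<Phi> = (THE m. sq_int S (\<lambda>x. \<Theta> x + m *s \<Phi> x))"

end

theory Submission
  imports Defs
begin


lemma mat2_nth[simp]: "mat2 a b c d $ 1 $ 1 = a" "mat2 a b c d $ 1 $ 2 = b"
   "mat2 a b c d $ 2 $ 1 = c" "mat2 a b c d $ 2 $ 2 = d"
  by (simp_all add: mat2_def)

lemma vec2_nth[simp]: "vec2 a b $ 1 = a" "vec2 a b $ 2 = b"
  by (simp_all add: vec2_def)

definition Uinv :: cmat where
  "Uinv = (1/2) *\<^sub>R mat2 (-1 - \<i>) (1 - \<i>) (-1 - \<i>) (-1 + \<i>)"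

lemma mat_eq2: "(M::cmat) = N \<longleftrightarrow> M$1$1 = N$1$1 \<and> M$1$2 = N$1$2 \<and> M$2$1 = N$2$1 \<and> M$2$2 = N$2$2"
  by (auto simp: vec_eq_iff forall_2)

lemma U_Uinv: "Umat ** Uinv = mat 1" "Uinv ** Umat = mat 1"
  by (simp_all add: mat_eq2 Umat_def Uinv_def matrix_matrix_mult_def sum_2 mat_def complex_eq_iff)

lemma matrix_inv_U: "matrix_inv Umat = Uinv"
proof -
  have "\<exists>B. Umat ** B = mat 1 \<and> B ** Umat = mat 1" using U_Uinv by blast
  then have B: "Umat ** matrix_inv Umat = mat 1 \<and> matrix_inv Umat ** Umat = mat 1"
    unfolding matrix_inv_def by (rule someI_ex)
  have "matrix_inv Umat = matrix_inv Umat ** (Umat ** Uinv)" by (simp add: U_Uinv)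
  also have "\<dots> = Uinv" using B by (simp add: matrix_mul_assoc)
  finally show ?thesis .
qed

lemma AH_conj: "A_H = Umat ** A_D ** Uinv" "A_D = Uinv ** A_H ** Umat"
  by (simp_all add: mat_eq2 Umat_def Uinv_def A_H_def A_D_def sigma3_def sigma4_def
       matrix_matrix_mult_def sum_2 complex_eq_iff algebra_simps)

lemma VH_conj: "V_H q x = Umat ** V_D q x ** Uinv" "V_D q x = Uinv ** V_H q x ** Umat"
  by (simp_all add: mat_eq2 Umat_def Uinv_def V_H_def V_D_def
       matrix_matrix_mult_def sum_2 complex_eq_iff algebra_simps)



lemma mv_smult: "(P::cmat) *v (c *s v) = c *s (P *v v)"
  by (simp add: vec_eq_iff matrix_vector_mult_def sum_2 algebra_simps)

lemma ode_rel_transform: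
  assumes "ode_rel A V S \<Psi> F" "Q ** P = mat 1"
  shows "ode_rel (P ** A ** Q) (\<lambda>x. P ** V x ** Q) S (\<lambda>x. P *v \<Psi> x) (\<lambda>x. P *v F x)"
proof -
  obtain g where g: "\<forall>a\<in>S. \<forall>b\<in>S. a \<le> b \<longrightarrow>
            g absolutely_integrable_on {a..b} \<and> \<Psi> b - \<Psi> a = integral {a..b} g"
    "AE x in lborel. x \<in> S \<longrightarrow> F x = A *v g x + V x *v \<Psi> x"
    using assms(1) unfolding ode_rel_def by blast
  have bl: "bounded_linear ((*v) P)" by simp
  show ?thesis unfolding ode_rel_def
  proof (intro exI conjI ballI impI)
    fix a b assume ab: "a \<in> S" "b \<in> S" "a \<le> b"
    have gi: "g absolutely_integrable_on {a..b}" "\<Psi> b - \<Psi> a = integral {a..b} g"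
      using g(1) ab by blast+
    show "(\<lambda>x. P *v g x) absolutely_integrable_on {a..b}"
      using absolutely_integrable_linear[OF gi(1) bl] by (simp add: o_def)
    have "integral {a..b} ((*v) P \<circ> g) = P *v integral {a..b} g"
      using gi(1) bl by (intro integral_linear) (auto simp: absolutely_integrable_on_def)
    thus "P *v \<Psi> b - P *v \<Psi> a = integral {a..b} (\<lambda>x. P *v g x)"
      using gi(2) by (simp add: o_def matrix_vector_mult_diff_distrib[symmetric])
  next
    show "AE x in lborel. x \<in> S \<longrightarrow> P *v F x = (P ** A ** Q) *v (P *v g x) + (P ** V x ** Q) *v (P *v \<Psi> x)"
      using g(2)
    proof eventually_elim
      fix x assume "x \<in> S \<longrightarrow> F x = A *v g x + V x *v \<Psi> x"
      moreover have "(P ** A ** Q) *v (P *v g x) = P *v (A *v g x)"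
      proof -
        have "(P ** A ** Q) ** P = (P ** A) ** (Q ** P)" by (simp add: matrix_mul_assoc)
        thus ?thesis by (simp add: matrix_vector_mul_assoc assms(2))
      qed
      moreover have "(P ** V x ** Q) *v (P *v \<Psi> x) = P *v (V x *v \<Psi> x)"
      proof -
        have "(P ** V x ** Q) ** P = (P ** V x) ** (Q ** P)" by (simp add: matrix_mul_assoc)
        thus ?thesis by (simp add: matrix_vector_mul_assoc assms(2))
      qed
      ultimately show "x \<in> S \<longrightarrow> P *v F x = (P ** A ** Q) *v (P *v g x) + (P ** V x ** Q) *v (P *v \<Psi> x)"
        by (simp add: matrix_vector_right_distrib)
    qed
  qed
qed

lemma ode_rel_diff:
  assumes "ode_rel A V S \<Psi>1 F1" "ode_rel A V S \<Psi>2 F2"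
  shows "ode_rel A V S (\<lambda>x. \<Psi>1 x - \<Psi>2 x) (\<lambda>x. F1 x - F2 x)"
proof -
  obtain g1 where g1: "\<forall>a\<in>S. \<forall>b\<in>S. a \<le> b \<longrightarrow>
            g1 absolutely_integrable_on {a..b} \<and> \<Psi>1 b - \<Psi>1 a = integral {a..b} g1"
    "AE x in lborel. x \<in> S \<longrightarrow> F1 x = A *v g1 x + V x *v \<Psi>1 x"
    using assms(1) unfolding ode_rel_def by blast
  obtain g2 where g2: "\<forall>a\<in>S. \<forall>b\<in>S. a \<le> b \<longrightarrow>
            g2 absolutely_integrable_on {a..b} \<and> \<Psi>2 b - \<Psi>2 a = integral {a..b} g2"
    "AE x in lborel. x \<in> S \<longrightarrow> F2 x = A *v g2 x + V x *v \<Psi>2 x"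
    using assms(2) unfolding ode_rel_def by blast
  show ?thesis unfolding ode_rel_def
  proof (intro exI conjI ballI impI)
    fix a b assume ab: "a \<in> S" "b \<in> S" "a \<le> b"
    have i1: "g1 absolutely_integrable_on {a..b}" "\<Psi>1 b - \<Psi>1 a = integral {a..b} g1"
      using g1(1) ab by blast+
    have i2: "g2 absolutely_integrable_on {a..b}" "\<Psi>2 b - \<Psi>2 a = integral {a..b} g2"
      using g2(1) ab by blast+
    show "(\<lambda>x. g1 x - g2 x) absolutely_integrable_on {a..b}"
      using set_integral_diff(1)[OF i1(1) i2(1)] .
    have "integral {a..b} (\<lambda>x. g1 x - g2 x) = integral {a..b} g1 - integral {a..b} g2"
      using i1(1) i2(1) by (intro integral_diff) (auto simp: absolutely_integrable_on_def)
    thus "\<Psi>1 b - \<Psi>2 b - (\<Psi>1 a - \<Psi>2 a) = integral {a..b} (\<lambda>x. g1 x - g2 x)"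
      using i1(2) i2(2) by (simp add: algebra_simps)
  next
    show "AE x in lborel. x \<in> S \<longrightarrow> F1 x - F2 x = A *v (g1 x - g2 x) + V x *v (\<Psi>1 x - \<Psi>2 x)"
      using g1(2) g2(2)
      by eventually_elim (simp add: matrix_vector_mult_diff_distrib algebra_simps)
  qed
qed



lemma norm_cvec: "norm (v::cvec) = sqrt ((cmod (v$1))\<^sup>2 + (cmod (v$2))\<^sup>2)"
  by (simp add: norm_vec_def L2_set_def sum_2)

lemma Umat_eq: "Umat = mat2 ((-1 + \<i>)/2) ((-1 + \<i>)/2) ((1 + \<i>)/2) ((-1 - \<i>)/2)"
  by (simp add: mat_eq2 Umat_def complex_eq_iff)
lemma Uinv_eq: "Uinv = mat2 ((-1 - \<i>)/2) ((1 - \<i>)/2) ((-1 - \<i>)/2) ((-1 + \<i>)/2)"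
  by (simp add: mat_eq2 Uinv_def complex_eq_iff)

lemma norm_U: "norm (Umat *v v) = norm v" "norm (Uinv *v v) = norm v"
  by (simp_all add: norm_cvec Umat_eq Uinv_eq matrix_vector_mult_def sum_2 cmod_power2,
      simp_all add: power2_eq_square field_simps)

lemma sq_int_transform:
  assumes "sq_int S f" "\<And>v. norm ((P::cmat) *v v) = norm v"
  shows "sq_int S (\<lambda>x. P *v f x)"
proof -
  have "((*v) P \<circ> f) measurable_on S"
    using assms(1) unfolding sq_int_def
    by (intro measurable_on_compose_continuous_0) (auto intro: linear_continuous_on)
  thus ?thesis using assms unfolding sq_int_def by (simp add: o_def)
qed

lemma l2norm_transform:
  assumes "\<And>v. norm ((P::cmat) *v v) = norm v"
  shows "l2norm S (\<lambda>x. P *v f x) = l2norm S f"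
  using assms by (simp add: l2norm_def)

lemma bc_U: "bc0 (\<alpha> v* Umat) \<Psi> \<longleftrightarrow> bc0 \<alpha> (\<lambda>x. Umat *v \<Psi> x)"
  by (simp add: bc0_def sum_2 vector_matrix_mult_def matrix_vector_mult_def algebra_simps)



lemma graph_transform:
  assumes "op_graph A V S bc \<Psi> F" "Q ** P = mat 1" "\<And>v. norm ((P::cmat) *v v) = norm v"
    and "A' = P ** A ** Q" "\<And>x. V' x = P ** V x ** Q"
    and "\<And>\<Psi>. bc \<Psi> \<Longrightarrow> bc' (\<lambda>x. P *v \<Psi> x)"
  shows "op_graph A' V' S bc' (\<lambda>x. P *v \<Psi> x) (\<lambda>x. P *v F x)"
proof -
  have V': "V' = (\<lambda>x. P ** V x ** Q)" using assms(5) by blast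
  show ?thesis using assms ode_rel_transform[of A V S \<Psi> F Q P] sq_int_transform[of S _ P]
    unfolding op_graph_def V' by blast
qed

lemma rs_subset:
  assumes PQ: "Q ** P = mat 1" "P ** Q = mat 1"
   and nP: "\<And>v. norm ((P::cmat) *v v) = norm v" and nQ: "\<And>v. norm (Q *v v) = norm v"
   and A': "A' = P ** A ** Q" and V': "\<And>x. V' x = P ** V x ** Q"
   and A: "A = Q ** A' ** P" and V: "\<And>x. V x = Q ** V' x ** P"
   and bc1: "\<And>\<Psi>. bc \<Psi> \<Longrightarrow> bc' (\<lambda>x. P *v \<Psi> x)"
   and bc2: "\<And>\<Psi>. bc' \<Psi> \<Longrightarrow> bc (\<lambda>x. Q *v \<Psi> x)"
  shows "resolvent_set A V S bc \<subseteq> resolvent_set A' V' S bc'"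
proof
  fix z assume z: "z \<in> resolvent_set A V S bc"
  have G1: "op_graph A' V' S bc' (\<lambda>x. P *v \<Psi> x) (\<lambda>x. P *v F x)" if "op_graph A V S bc \<Psi> F" for \<Psi> F
    using graph_transform[where bc'=bc' and V'=V' and A'=A' and Q=Q and P=P, OF that PQ(1) nP A' V' bc1] .
  have G2: "op_graph A V S bc (\<lambda>x. Q *v \<Psi> x) (\<lambda>x. Q *v F x)" if "op_graph A' V' S bc' \<Psi> F" for \<Psi> F
    using graph_transform[where bc'=bc and V'=V and A'=A and Q=P and P=Q, OF that PQ(2) nQ A V bc2] .
  from z have z1: "\<And>f. sq_int S f \<Longrightarrow> \<exists>\<Psi> F. op_graph A V S bc \<Psi> F \<and>
          (AE x in lborel. x \<in> S \<longrightarrow> F x - z *s \<Psi> x = f x)"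
    and z2: "\<exists>C. \<forall>\<Psi> F. op_graph A V S bc \<Psi> F \<longrightarrow>
          l2norm S \<Psi> \<le> C * l2norm S (\<lambda>x. F x - z *s \<Psi> x)"
    unfolding resolvent_set_def by blast+
  show "z \<in> resolvent_set A' V' S bc'" unfolding resolvent_set_def
  proof (intro CollectI conjI allI impI)
    fix f assume f: "sq_int S f"
    obtain \<Psi> F where PF: "op_graph A V S bc \<Psi> F"
      "AE x in lborel. x \<in> S \<longrightarrow> F x - z *s \<Psi> x = Q *v f x"
      using z1[OF sq_int_transform[OF f nQ]] by blast
    have "AE x in lborel. x \<in> S \<longrightarrow> P *v F x - z *s (P *v \<Psi> x) = f x"
      using PF(2)
    proof eventually_elim
      fix x assume "x \<in> S \<longrightarrow> F x - z *s \<Psi> x = Q *v f x"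
      moreover have "P *v F x - z *s (P *v \<Psi> x) = P *v (F x - z *s \<Psi> x)"
        by (simp add: matrix_vector_mult_diff_distrib mv_smult)
      moreover have "P *v (Q *v f x) = f x" by (simp add: matrix_vector_mul_assoc PQ)
      ultimately show "x \<in> S \<longrightarrow> P *v F x - z *s (P *v \<Psi> x) = f x" by simp
    qed
    thus "\<exists>\<Psi> F. op_graph A' V' S bc' \<Psi> F \<and> (AE x in lborel. x \<in> S \<longrightarrow> F x - z *s \<Psi> x = f x)"
      using G1[OF PF(1)] by blast
  next
    obtain C where C: "\<And>\<Psi> F. op_graph A V S bc \<Psi> F \<Longrightarrow>
          l2norm S \<Psi> \<le> C * l2norm S (\<lambda>x. F x - z *s \<Psi> x)" using z2 by blast
    show "\<exists>C. \<forall>\<Psi> F. op_graph A' V' S bc' \<Psi> F \<longrightarrow>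
          l2norm S \<Psi> \<le> C * l2norm S (\<lambda>x. F x - z *s \<Psi> x)"
    proof (intro exI allI impI)
      fix \<Psi> F assume g: "op_graph A' V' S bc' \<Psi> F"
      have "l2norm S (\<lambda>x. Q *v \<Psi> x) \<le> C * l2norm S (\<lambda>x. Q *v F x - z *s (Q *v \<Psi> x))"
        using C[OF G2[OF g]] .
      moreover have "(\<lambda>x. Q *v F x - z *s (Q *v \<Psi> x)) = (\<lambda>x. Q *v (F x - z *s \<Psi> x))"
        by (simp add: matrix_vector_mult_diff_distrib mv_smult)
      ultimately show "l2norm S \<Psi> \<le> C * l2norm S (\<lambda>x. F x - z *s \<Psi> x)"
        by (simp add: l2norm_transform[OF nQ])
    qed
  qed
qed



lemma AE_negligible:
  assumes "AE x in lborel. P x"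
  obtains N where "negligible N" "\<And>x. x \<notin> N \<Longrightarrow> P x"
proof -
  from assms obtain N where N: "{x \<in> space lborel. \<not> P x} \<subseteq> N" "N \<in> null_sets lborel"
    by (auto elim!: AE_E simp: null_setsI)
  have "N \<in> null_sets lebesgue" using N(2) null_sets_completionI
    by (metis null_sets_completion)
  hence "negligible N" by (simp add: negligible_iff_null_sets)
  with N(1) show ?thesis using that by auto
qed

lemma int_bound_ae:
  fixes g :: "real \<Rightarrow> 'a::euclidean_space"
  assumes "negligible N" "\<And>x. x \<notin> N \<Longrightarrow> norm (g x) \<le> k x * norm (Y x)"
    and "g integrable_on {a..b}" "k integrable_on {a..b}"
    and "\<And>t. t \<in> {a..b} \<Longrightarrow> norm (Y t) \<le> M" "0 \<le> M" "\<And>t. 0 \<le> k t"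
  shows "norm (integral {a..b} g) \<le> M * integral {a..b} k"
proof -
  define g' where "g' t = (if t \<in> N then 0 else g t)" for t
  have e: "integral {a..b} g = integral {a..b} g'"
    by (rule integral_spike[OF assms(1)]) (auto simp: g'_def)
  have gi: "g' integrable_on {a..b}"
  proof (rule integrable_spike[OF assms(3) assms(1)])
    fix x assume "x \<in> {a..b} - N" thus "g' x = g x" by (simp add: g'_def)
  qed
  have "norm (integral {a..b} g') \<le> integral {a..b} (\<lambda>t. M * k t)"
  proof (rule Henstock_Kurzweil_Integration.integral_norm_bound_integral[OF gi])
    show "(\<lambda>t. M * k t) integrable_on {a..b}" using integrable_cmul[OF assms(4), of M] by simp
    fix t assume t: "t \<in> {a..b}"
    show "norm (g' t) \<le> M * k t"
    proof (cases "t \<in> N")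
      case True thus ?thesis using assms(6,7) by (simp add: g'_def)
    next
      case False
      hence "norm (g t) \<le> k t * norm (Y t)" using assms(2) by blast
      also have "\<dots> \<le> k t * M" using assms(5)[OF t] assms(7) by (simp add: mult_left_mono)
      finally show ?thesis using False by (simp add: g'_def mult.commute)
    qed
  qed
  also have "\<dots> = M * integral {a..b} k" by simp
  finally show ?thesis using e by simp
qed

lemma cont_from_int:
  fixes g Y :: "real \<Rightarrow> 'a::euclidean_space"
  assumes "\<And>a b. a \<le> b \<Longrightarrow> g integrable_on {a..b} \<and> Y b - Y a = integral {a..b} g"
  shows "continuous_on UNIV Y"
proof (rule continuous_at_imp_continuous_on, intro ballI)
  fix x :: real
  have c: "continuous_on {x-1..x+1} (\<lambda>t. integral {x-1..t} g)"
    by (rule indefinite_integral_continuous_1) (use assms[of "x-1" "x+1"] in simp)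
  have "continuous_on {x-1..x+1} (\<lambda>t. Y (x-1) + integral {x-1..t} g)"
    by (intro continuous_intros c)
  moreover have "\<And>t. t \<in> {x-1..x+1} \<Longrightarrow> Y (x-1) + integral {x-1..t} g = Y t"
  proof -
    fix t assume "t \<in> {x-1..x+1}"
    hence "x - 1 \<le> t" by simp
    from assms[OF this] have "Y t - Y (x-1) = integral {x-1..t} g" by blast
    thus "Y (x-1) + integral {x-1..t} g = Y t" by (simp add: algebra_simps)
  qed
  ultimately have "continuous_on {x-1..x+1} Y" by (rule continuous_on_eq)
  moreover have "x \<in> interior {x-1..x+1}" by simp
  ultimately show "isCont Y x" using continuous_on_interior by blast
qed

lemma small_int:
  fixes k :: "real \<Rightarrow> real"
  assumes "\<And>a b. k integrable_on {a..b}"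
  shows "\<exists>d>0. integral {x0-d..x0+d} k \<le> 1/2"
proof -
  define h where "h t = integral {x0-1..t} k" for t
  have c: "continuous_on {x0-1..x0+1} h" unfolding h_def
    by (rule indefinite_integral_continuous_1) (use assms in simp)
  have "x0 \<in> interior {x0-1..x0+1}" by simp
  hence "isCont h x0" using continuous_on_interior c by blast
  then obtain e where e: "e > 0" "\<And>t. dist t x0 < e \<Longrightarrow> dist (h t) (h x0) < 1/4"
    unfolding continuous_at_eps_delta by (metis divide_pos_pos zero_less_numeral zero_less_one)
  define d where "d = min (e/2) (1/2)"
  have d: "d > 0" "d < e" "d \<le> 1/2" using e by (auto simp: d_def)
  have 1: "integral {x0-1..x0-d} k + integral {x0-d..x0+d} k = integral {x0-1..x0+d} k"
    using d by (intro Henstock_Kurzweil_Integration.integral_combine[OF _ _ assms]) auto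
  have 2: "integral {x0-1..x0-d} k = h (x0-d)" by (simp add: h_def)
  have 3: "integral {x0-1..x0+d} k = h (x0+d)" by (simp add: h_def)
  have "dist (h (x0+d)) (h x0) < 1/4" "dist (h (x0-d)) (h x0) < 1/4"
    using e(2)[of "x0+d"] e(2)[of "x0-d"] d by (auto simp: dist_real_def)
  hence "integral {x0-d..x0+d} k \<le> 1/2" using 1 2 3 unfolding dist_real_def by linarith
  thus ?thesis using d by blast
qed

lemma ode_zero:
  fixes g Y :: "real \<Rightarrow> 'a::euclidean_space"
  assumes int: "\<And>a b. a \<le> b \<Longrightarrow> g integrable_on {a..b} \<and> Y b - Y a = integral {a..b} g"
    and kint: "\<And>a b. k integrable_on {a..b}" and kpos: "\<And>t. 0 \<le> k t"
    and ae: "AE x in lborel. norm (g x) \<le> k x * norm (Y x)"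
    and Y0: "Y x0 = 0"
  shows "Y x = 0"
proof -
  obtain N where N: "negligible N" "\<And>x. x \<notin> N \<Longrightarrow> norm (g x) \<le> k x * norm (Y x)"
    using AE_negligible[OF ae] by blast
  have cY: "continuous_on UNIV Y" using cont_from_int[OF int] by blast
  define Z where "Z = {x. Y x = 0}"
  have cl: "closed Z" unfolding Z_def
    using closed_Collect_eq[OF cY continuous_on_const[of UNIV 0]] by simp
  have op: "open Z" unfolding open_contains_ball
  proof
    fix c assume "c \<in> Z"
    hence Yc: "Y c = 0" by (simp add: Z_def)
    obtain d where d: "d > 0" "integral {c-d..c+d} k \<le> 1/2" using small_int[OF kint] by blast
    define I where "I = {c-d..c+d}"
    have "compact I" "I \<noteq> {}" using d by (auto simp: I_def)
    moreover have "continuous_on I (\<lambda>t. norm (Y t))"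
      by (intro continuous_intros continuous_on_subset[OF cY]) auto
    ultimately obtain x1 where x1: "x1 \<in> I" "\<And>t. t \<in> I \<Longrightarrow> norm (Y t) \<le> norm (Y x1)"
      using continuous_attains_sup[of I "\<lambda>t. norm (Y t)"] by auto
    define M where "M = norm (Y x1)"
    have M0: "0 \<le> M" by (simp add: M_def)
    have bnd: "\<And>a b. a \<le> b \<Longrightarrow> {a..b} \<subseteq> I \<Longrightarrow> norm (integral {a..b} g) \<le> M * (1/2)"
    proof -
      fix a b assume ab: "a \<le> b" "{a..b} \<subseteq> I"
      have A: "norm (integral {a..b} g) \<le> M * integral {a..b} k"
      proof (rule int_bound_ae[OF N(1) N(2)])
        show "g integrable_on {a..b}" using int[OF ab(1)] by blast
        show "k integrable_on {a..b}" by (rule kint)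
        show "\<And>t. t \<in> {a..b} \<Longrightarrow> norm (Y t) \<le> M" using ab(2) x1(2) unfolding M_def by blast
      qed (use M0 kpos in auto)
      have "integral {a..b} k \<le> integral I k"
        using ab(2) kint kpos unfolding I_def by (intro integral_subset_le) auto
      hence "integral {a..b} k \<le> 1/2" using d(2) unfolding I_def by linarith
      hence "M * integral {a..b} k \<le> M * (1/2)" using M0 by (rule mult_left_mono)
      with A show "norm (integral {a..b} g) \<le> M * (1/2)" by linarith
    qed
    have "M \<le> M * (1/2)"
    proof (cases "c \<le> x1")
      case True
      hence "Y x1 = integral {c..x1} g" using int[OF True] Yc by simp
      moreover have "{c..x1} \<subseteq> I" using x1(1) d(1) by (auto simp: I_def)
      ultimately show ?thesis using bnd[OF True] by (simp add: M_def)
    next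
      case False
      hence F: "x1 \<le> c" by simp
      hence "- Y x1 = integral {x1..c} g" using int[OF F] Yc by simp
      moreover have "{x1..c} \<subseteq> I" using x1(1) d(1) by (auto simp: I_def)
      ultimately show ?thesis using bnd[OF F] unfolding M_def by (metis norm_minus_cancel)
    qed
    hence "M = 0" using M0 by simp
    hence "\<And>t. t \<in> I \<Longrightarrow> Y t = 0" using x1(2) unfolding M_def by (smt (verit) norm_le_zero_iff)
    moreover have "ball c d \<subseteq> I" unfolding I_def by (auto simp: dist_real_def)
    ultimately show "\<exists>e>0. ball c e \<subseteq> Z" using d(1) unfolding Z_def by blast
  qed
  have "Z \<inter> (- Z) \<inter> UNIV = {}" by auto
  hence "Z \<inter> UNIV = {} \<or> (- Z) \<inter> UNIV = {}"
    using connectedD[OF connected_UNIV op, of "- Z"] cl by (auto simp: open_Compl)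
  moreover have "x0 \<in> Z" using Y0 by (simp add: Z_def)
  ultimately have "- Z = {}" by blast
  hence "x \<in> Z" by blast
  thus ?thesis by (simp add: Z_def)
qed



lemma norm_nth_cvec: "cmod ((v::cvec) $ i) \<le> norm v"
  by (rule Finite_Cartesian_Product.norm_nth_le)

lemma norm_cvec_le: "norm (v::cvec) \<le> cmod (v$1) + cmod (v$2)"
proof -
  have "sqrt ((cmod (v$1))\<^sup>2 + (cmod (v$2))\<^sup>2) \<le> cmod (v$1) + cmod (v$2)"
    by (rule real_le_lsqrt) (auto simp: power2_eq_square algebra_simps)
  thus ?thesis by (simp add: norm_cvec)
qed

lemma D_bound:
  assumes "z *s Y = A_D *v g + V_D q x *v Y"
  shows "norm g \<le> 2 * (cmod z + cmod (q x)) * norm Y"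
proof -
  have c1: "z * Y$1 = \<i> * g$1 - \<i> * q x * Y$2"
    using arg_cong[OF assms, of "\<lambda>v. v$1"]
    by (simp add: A_D_def V_D_def sigma3_def matrix_vector_mult_def sum_2)
  have c2: "z * Y$2 = - \<i> * g$2 - \<i> * cnj (q x) * Y$1"
    using arg_cong[OF assms, of "\<lambda>v. v$2"]
    by (simp add: A_D_def V_D_def sigma3_def matrix_vector_mult_def sum_2)
  have g1: "g$1 = - \<i> * z * Y$1 + q x * Y$2"
  proof -
    have "- \<i> * (z * Y$1) = - \<i> * (\<i> * g$1 - \<i> * q x * Y$2)" using c1 by simp
    thus ?thesis by (simp add: algebra_simps)
  qed
  have g2: "g$2 = \<i> * z * Y$2 - cnj (q x) * Y$1"
  proof -
    have "\<i> * (z * Y$2) = \<i> * (- \<i> * g$2 - \<i> * cnj (q x) * Y$1)" using c2 by simp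
    thus ?thesis by (simp add: algebra_simps)
  qed
  have n1: "cmod (Y$1) \<le> norm Y" "cmod (Y$2) \<le> norm Y" by (rule norm_nth_cvec)+
  have "cmod (g$1) \<le> cmod z * cmod (Y$1) + cmod (q x) * cmod (Y$2)"
    unfolding g1 by (rule order_trans[OF norm_triangle_ineq]) (simp add: norm_mult)
  also have "\<dots> \<le> cmod z * norm Y + cmod (q x) * norm Y"
    using n1 by (intro add_mono mult_left_mono) auto
  finally have a1: "cmod (g$1) \<le> (cmod z + cmod (q x)) * norm Y" by (simp add: algebra_simps)
  have "cmod (g$2) \<le> cmod z * cmod (Y$2) + cmod (q x) * cmod (Y$1)"
    unfolding g2 by (rule order_trans[OF norm_triangle_ineq4]) (simp add: norm_mult)
  also have "\<dots> \<le> cmod z * norm Y + cmod (q x) * norm Y"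
    using n1 by (intro add_mono mult_left_mono) auto
  finally have a2: "cmod (g$2) \<le> (cmod z + cmod (q x)) * norm Y" by (simp add: algebra_simps)
  show ?thesis using norm_cvec_le[of g] a1 a2 by linarith
qed

lemma D_uniq:
  assumes q: "loc_integrable q" and ode: "ode_rel A_D (V_D q) UNIV Y (\<lambda>x. z *s Y x)"
    and Y0: "Y 0 = 0"
  shows "Y x = 0"
proof -
  obtain g where g: "\<forall>a\<in>UNIV. \<forall>b\<in>UNIV. a \<le> b \<longrightarrow>
            g absolutely_integrable_on {a..b} \<and> Y b - Y a = integral {a..b} g"
    "AE x in lborel. x \<in> UNIV \<longrightarrow> z *s Y x = A_D *v g x + V_D q x *v Y x"
    using ode unfolding ode_rel_def by blast
  define k where "k t = 2 * (cmod z + cmod (q t))" for t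
  show ?thesis
  proof (rule ode_zero[of g Y k 0 x])
    fix a b :: real assume "a \<le> b"
    thus "g integrable_on {a..b} \<and> Y b - Y a = integral {a..b} g"
      using g(1) by (auto simp: absolutely_integrable_on_def)
  next
    fix a b :: real
    have "(\<lambda>t. cmod (q t)) integrable_on {a..b}"
      using q unfolding loc_integrable_def absolutely_integrable_on_def by blast
    hence "(\<lambda>t. cmod z + cmod (q t)) integrable_on {a..b}"
      by (intro integrable_add) auto
    from integrable_cmul[OF this, of 2] show "k integrable_on {a..b}" unfolding k_def by simp
  next
    fix t show "0 \<le> k t" by (simp add: k_def)
  next
    show "AE x in lborel. norm (g x) \<le> k x * norm (Y x)"
      using g(2) by eventually_elim (simp only: k_def, rule D_bound, simp)
  next
    show "Y 0 = 0" by (rule Y0)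
  qed
qed



lemma exp_i_theta: "exp (\<i> * complex_of_real t) = of_real (cos t) + \<i> * of_real (sin t)"
  by (simp add: cis_conv_exp[symmetric] complex_eq_iff)

lemma exp_mi_theta: "exp (- \<i> * complex_of_real t) = of_real (cos t) - \<i> * of_real (sin t)"
proof -
  have e: "exp (- \<i> * complex_of_real t) = cis (-t)" using cis_conv_exp[of "-t"] by simp
  show ?thesis unfolding e by (simp add: complex_eq_iff)
qed

lemma vec_eq2: "(v::cvec) = w \<longleftrightarrow> v$1 = w$1 \<and> v$2 = w$2"
  by (auto simp: vec_eq_iff forall_2)

lemma transfer_sol:
  assumes "ode_rel A_H (V_H q) UNIV Th (\<lambda>x. z *s Th x)"
  shows "ode_rel A_D (V_D q) UNIV (\<lambda>x. Uinv *v Th x) (\<lambda>x. z *s (Uinv *v Th x))"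
proof -
  have "ode_rel (Uinv ** A_H ** Umat) (\<lambda>x. Uinv ** V_H q x ** Umat) UNIV
          (\<lambda>x. Uinv *v Th x) (\<lambda>x. Uinv *v (z *s Th x))"
    by (rule ode_rel_transform[OF assms U_Uinv(1)])
  thus ?thesis by (simp add: AH_conj(2)[symmetric] VH_conj(2)[symmetric] mv_smult)
qed

lemma uniq_sol:
  assumes q: "loc_integrable q"
    and D: "ode_rel A_D (V_D q) UNIV ThD (\<lambda>x. z *s ThD x)"
    and H: "ode_rel A_H (V_H q) UNIV ThH (\<lambda>x. z *s ThH x)"
    and i: "ThD 0 = Uinv *v ThH 0"
  shows "ThD = (\<lambda>x. Uinv *v ThH x)"
proof
  fix x
  have "ode_rel A_D (V_D q) UNIV (\<lambda>x. ThD x - Uinv *v ThH x) (\<lambda>x. z *s ThD x - z *s (Uinv *v ThH x))"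
    by (rule ode_rel_diff[OF D transfer_sol[OF H]])
  moreover have "(\<lambda>x. z *s ThD x - z *s (Uinv *v ThH x)) = (\<lambda>x. z *s (ThD x - Uinv *v ThH x))"
    by (rule ext, rule vector_ssub_ldistrib[symmetric])
  ultimately have "ode_rel A_D (V_D q) UNIV (\<lambda>x. ThD x - Uinv *v ThH x) (\<lambda>x. z *s (ThD x - Uinv *v ThH x))"
    by (simp only:)
  from D_uniq[OF q this, of x] i show "ThD x = Uinv *v ThH x" by simp
qed

lemma sq_int_Uinv_iff: "sq_int S (\<lambda>x. Uinv *v f x) \<longleftrightarrow> sq_int S f"
proof
  assume "sq_int S (\<lambda>x. Uinv *v f x)"
  from sq_int_transform[OF this norm_U(1)] show "sq_int S f"
    by (simp add: matrix_vector_mul_assoc U_Uinv)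
next
  assume "sq_int S f"
  from sq_int_transform[OF this norm_U(2)] show "sq_int S (\<lambda>x. Uinv *v f x)" .
qed

lemma bc_Uinv: "bc0 (\<alpha> v* Umat) (\<lambda>x. Uinv *v \<Psi> x) \<longleftrightarrow> bc0 \<alpha> \<Psi>"
  by (simp add: bc_U matrix_vector_mul_assoc U_Uinv)

lemma rs_eq:
  "resolvent_set A_D (V_D q) S bc = resolvent_set A_H (V_H q) S bc'"
  if "\<And>\<Psi>. bc \<Psi> \<Longrightarrow> bc' (\<lambda>x. Umat *v \<Psi> x)" "\<And>\<Psi>. bc' \<Psi> \<Longrightarrow> bc (\<lambda>x. Uinv *v \<Psi> x)"
proof
  show "resolvent_set A_D (V_D q) S bc \<subseteq> resolvent_set A_H (V_H q) S bc'"
    by (rule rs_subset[where P=Umat and Q=Uinv and A=A_D and A'=A_H and V="V_D q" and V'="V_H q"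
          and bc=bc and bc'=bc' and S=S, OF U_Uinv(2,1) norm_U AH_conj(1) VH_conj(1)[of q] AH_conj(2) VH_conj(2)[of q] that])
  show "resolvent_set A_H (V_H q) S bc' \<subseteq> resolvent_set A_D (V_D q) S bc"
    by (rule rs_subset[where P=Uinv and Q=Umat and A=A_H and A'=A_D and V="V_H q" and V'="V_D q"
          and bc=bc' and bc'=bc and S=S, OF U_Uinv norm_U(2,1) AH_conj(2) VH_conj(2)[of q] AH_conj(1) VH_conj(1)[of q] that(2,1)])
qed

theorem lemma4p4:
  fixes q :: "real \<Rightarrow> complex" and \<theta> :: real and z :: complex and S :: "real set"
    and ThH PhH ThD PhD :: "real \<Rightarrow> complex ^ 2"
  assumes q_loc: "loc_integrable q"
    and rho_ne: "resolvent_set A_D (V_D q) UNIV no_bc \<noteq> {}"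
    and theta: "0 \<le> \<theta>" "\<theta> < 2 * pi"
    and halfline: "S = {0..} \<or> S = {..0}"
    and ThH: "ode_rel A_H (V_H q) UNIV ThH (\<lambda>x. z *s ThH x)"
             "ThH 0 = vec2 (cos \<theta>) (sin \<theta>)"
    and PhH: "ode_rel A_H (V_H q) UNIV PhH (\<lambda>x. z *s PhH x)"
             "PhH 0 = vec2 (- sin \<theta>) (cos \<theta>)"
    and ThD: "ode_rel A_D (V_D q) UNIV ThD (\<lambda>x. z *s ThD x)"
             "ThD 0 = (- (1 + \<i>) / 2) *s vec2 (exp (\<i> * \<theta>)) (exp (- \<i> * \<theta>))"
    and PhD: "ode_rel A_D (V_D q) UNIV PhD (\<lambda>x. z *s PhD x)"
             "PhD 0 = ((1 - \<i>) / 2) *s vec2 (exp (\<i> * \<theta>)) (- exp (- \<i> * \<theta>))"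
    and z: "z \<in> resolvent_set A_D (V_D q) UNIV no_bc \<inter>
              resolvent_set A_D (V_D q) S (bc0 (vec2 (cos \<theta>) (sin \<theta>) v* Umat))"
  shows "resolvent_set A_D (V_D q) UNIV no_bc \<inter>
           resolvent_set A_D (V_D q) S (bc0 (vec2 (cos \<theta>) (sin \<theta>) v* Umat))
         = resolvent_set A_H (V_H q) UNIV no_bc \<inter>
           resolvent_set A_H (V_H q) S (bc0 (vec2 (cos \<theta>) (sin \<theta>)))
       \<and> (\<forall>x. ThD x + weyl_m S ThD PhD *s PhD x
              = matrix_inv Umat *v (ThH x + weyl_m S ThH PhH *s PhH x))
       \<and> weyl_m S ThD PhD = weyl_m S ThH PhH"
proof -
  have i1: "ThD 0 = Uinv *v ThH 0"
    unfolding ThD(2) ThH(2) exp_i_theta exp_mi_theta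
    by (simp add: vec_eq2 Uinv_eq matrix_vector_mult_def sum_2 complex_eq_iff algebra_simps)
  have i2: "PhD 0 = Uinv *v PhH 0"
    unfolding PhD(2) PhH(2) exp_i_theta exp_mi_theta
    by (simp add: vec_eq2 Uinv_eq matrix_vector_mult_def sum_2 complex_eq_iff algebra_simps)
  have eT: "ThD = (\<lambda>x. Uinv *v ThH x)" by (rule uniq_sol[OF q_loc ThD(1) ThH(1) i1])
  have eP: "PhD = (\<lambda>x. Uinv *v PhH x)" by (rule uniq_sol[OF q_loc PhD(1) PhH(1) i2])
  have lin: "\<And>x m. ThD x + m *s PhD x = Uinv *v (ThH x + m *s PhH x)"
    by (simp add: eT eP matrix_vector_right_distrib mv_smult)
  have wm: "weyl_m S ThD PhD = weyl_m S ThH PhH"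
    unfolding weyl_m_def lin sq_int_Uinv_iff ..
  have r1: "resolvent_set A_D (V_D q) UNIV no_bc = resolvent_set A_H (V_H q) UNIV no_bc"
    by (rule rs_eq) (simp_all add: no_bc_def)
  have r2: "resolvent_set A_D (V_D q) S (bc0 (vec2 (cos \<theta>) (sin \<theta>) v* Umat))
      = resolvent_set A_H (V_H q) S (bc0 (vec2 (cos \<theta>) (sin \<theta>)))"
    by (rule rs_eq) (simp add: bc_U, simp add: bc_Uinv)
  show ?thesis using r1 r2 wm lin matrix_inv_U by simp
qed

end
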